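(* Let $K$ be a compact Hausdorff space and $X$ a C-rich subspace of $C(K)$ (real or complex). Then $n_L(X)=1$.
   Context: $C(K)$ is the Banach space of continuous scalar-valued functions on $K$ with the sup norm. A closed subspace $X$ of $C(K)$ is C-rich if for every nonempty open $U\subset K$ and every $\varepsilon>0$ there is a nonnegative function $h\in C(K)$ with $\|h\|=1$ and $\mathrm{supp}(h)\subset U$ such that $\mathrm{dist}(h,X)<\varepsilon$. For a Banach space $X$: $\mathrm{Lip}_0(X)$ is the set of Lipschitz maps $T:X\to X$ with $T(0)=0$, with $\|T\|_L=\sup\{\|Tx-Ty\|/\|x-y\|: x\neq y\}$; $D(x)=\{x^*\in X^*: x^*(x)=\|x^*\|\|x\|=\|x\|^2\}$; $\omega(T)=\sup\{|f(Tx-Ty)|/\|x-y\|^2: x\neq y,\ f\in D(x-y)\}$; $n_L(X)=\inf\{\omega(T): T\in\mathrm{Lip}_0(X),\ \|T\|_L=1\}$. *)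

theory Defs
  imports "HOL-Analysis.Analysis"
begin

text \<open>C(K) is modelled as the bounded continuous functions from K to 'f on a compact
  Hausdorff type 'k (so all continuous functions are bounded), with the sup norm.\<close>

definition scaleF :: "'f::real_normed_field \<Rightarrow> ('a::topological_space \<Rightarrow>\<^sub>C 'f) \<Rightarrow> ('a \<Rightarrow>\<^sub>C 'f)" where
  "scaleF c g = Bcontfun (\<lambda>x. c * apply_bcontfun g x)"

definition closed_subspaceF :: "('a::topological_space \<Rightarrow>\<^sub>C 'f::real_normed_field) set \<Rightarrow> bool" where
  "closed_subspaceF X \<longleftrightarrow> 0 \<in> X \<and> (\<forall>f\<in>X. \<forall>g\<in>X. f + g \<in> X) \<and>
     (\<forall>c. \<forall>f\<in>X. scaleF c f \<in> X) \<and> closed X"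

definition C_rich :: "('a::topological_space \<Rightarrow>\<^sub>C 'f::real_normed_field) set \<Rightarrow> bool" where
  "C_rich X \<longleftrightarrow> closed_subspaceF X \<and>
     (\<forall>U. open U \<and> U \<noteq> {} \<longrightarrow> (\<forall>\<epsilon>>0. \<exists>h.
        (\<forall>t. \<exists>r\<ge>0. apply_bcontfun h t = of_real r) \<and> norm h = 1 \<and>
        closure {t. apply_bcontfun h t \<noteq> 0} \<subseteq> U \<and> infdist h X < \<epsilon>))"

text \<open>Elements of the dual X^* (functionals considered on X only).\<close>
definition dualF :: "('a::topological_space \<Rightarrow>\<^sub>C 'f::real_normed_field) set
    \<Rightarrow> (('a \<Rightarrow>\<^sub>C 'f) \<Rightarrow> 'f) set" where
  "dualF X = {\<phi>. (\<forall>x\<in>X. \<forall>y\<in>X. \<phi> (x + y) = \<phi> x + \<phi> y) \<and>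
                 (\<forall>c. \<forall>x\<in>X. \<phi> (scaleF c x) = c * \<phi> x) \<and>
                 (\<exists>C. \<forall>x\<in>X. norm (\<phi> x) \<le> C * norm x)}"

definition dual_norm :: "('a::topological_space \<Rightarrow>\<^sub>C 'f::real_normed_field) set
    \<Rightarrow> (('a \<Rightarrow>\<^sub>C 'f) \<Rightarrow> 'f) \<Rightarrow> real" where
  "dual_norm X \<phi> = Sup {norm (\<phi> x) | x. x \<in> X \<and> norm x \<le> 1}"

definition Dset :: "('a::topological_space \<Rightarrow>\<^sub>C 'f::real_normed_field) set
    \<Rightarrow> ('a \<Rightarrow>\<^sub>C 'f) \<Rightarrow> (('a \<Rightarrow>\<^sub>C 'f) \<Rightarrow> 'f) set" where
  "Dset X x = {\<phi> \<in> dualF X. \<phi> x = of_real (dual_norm X \<phi> * norm x) \<and>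
                              dual_norm X \<phi> * norm x = (norm x)\<^sup>2}"

definition Lip0 :: "('a::topological_space \<Rightarrow>\<^sub>C 'f::real_normed_field) set
    \<Rightarrow> (('a \<Rightarrow>\<^sub>C 'f) \<Rightarrow> ('a \<Rightarrow>\<^sub>C 'f)) set" where
  "Lip0 X = {T. T ` X \<subseteq> X \<and> T 0 = 0 \<and> (\<exists>C. C-lipschitz_on X T)}"

definition lip_norm :: "('a::topological_space \<Rightarrow>\<^sub>C 'f::real_normed_field) set
    \<Rightarrow> (('a \<Rightarrow>\<^sub>C 'f) \<Rightarrow> ('a \<Rightarrow>\<^sub>C 'f)) \<Rightarrow> real" where
  "lip_norm X T = Sup {norm (T x - T y) / norm (x - y) | x y. x \<in> X \<and> y \<in> X \<and> x \<noteq> y}"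

definition omega :: "('a::topological_space \<Rightarrow>\<^sub>C 'f::real_normed_field) set
    \<Rightarrow> (('a \<Rightarrow>\<^sub>C 'f) \<Rightarrow> ('a \<Rightarrow>\<^sub>C 'f)) \<Rightarrow> real" where
  "omega X T = Sup {norm (\<phi> (T x - T y)) / (norm (x - y))\<^sup>2 | x y \<phi>.
                     x \<in> X \<and> y \<in> X \<and> x \<noteq> y \<and> \<phi> \<in> Dset X (x - y)}"

definition nL :: "('a::topological_space \<Rightarrow>\<^sub>C 'f::real_normed_field) set \<Rightarrow> real" where
  "nL X = Inf {omega X T | T. T \<in> Lip0 X \<and> lip_norm X T = 1}"

end

theory Submission
  imports Defs
begin


lemma scaleF_in: "(\<lambda>x. c * apply_bcontfun (g::'a::topological_space \<Rightarrow>\<^sub>C 'f::real_normed_field) x) \<in> bcontfun"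
  by (rule bcontfun_normI[where b="norm c * norm g"])
     (auto intro!: continuous_intros mult_left_mono norm_bounded simp: norm_mult)

lemma scaleF_apply[simp]: "apply_bcontfun (scaleF c g) x = c * apply_bcontfun g x"
  unfolding scaleF_def using scaleF_in[of c g] by (simp add: Bcontfun_inverse)

lemma norm_scaleF: "norm (scaleF c (g::'a::topological_space \<Rightarrow>\<^sub>C 'f::real_normed_field)) = norm c * norm g"
proof (rule antisym)
  show "norm (scaleF c g) \<le> norm c * norm g"
    by (rule norm_bound) (auto simp: norm_mult intro!: mult_left_mono norm_bounded)
  show "norm c * norm g \<le> norm (scaleF c g)"
  proof (cases "c = 0")
    case False
    have "norm g \<le> norm (scaleF c g) / norm c"
    proof (rule norm_bound)
      fix x
      have "norm c * norm (apply_bcontfun g x) \<le> norm (scaleF c g)"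
        using norm_bounded[of "scaleF c g" x] by (simp add: norm_mult)
      then show "norm (apply_bcontfun g x) \<le> norm (scaleF c g) / norm c"
        using False by (simp add: field_simps)
    qed
    then show ?thesis using False by (simp add: field_simps)
  qed simp
qed

lemma attains_norm:
  assumes "compact (UNIV :: 'k::topological_space set)"
  shows "\<exists>t. norm (apply_bcontfun (f::'k \<Rightarrow>\<^sub>C 'f::real_normed_vector) t) = norm f"
proof -
  have "continuous_on UNIV (\<lambda>t. norm (apply_bcontfun f t))"
    by (intro continuous_intros) auto
  from continuous_attains_sup[OF assms _ this] obtain t where
    t: "\<forall>y. norm (apply_bcontfun f y) \<le> norm (apply_bcontfun f t)" by auto
  have "norm f \<le> norm (apply_bcontfun f t)" by (rule norm_bound) (use t in auto)
  with norm_bounded[of f t] show ?thesis by (intro exI[of _ t]) auto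
qed

lemma infdist_lt_ex:
  assumes "infdist x A < e" "A \<noteq> {}"
  shows "\<exists>a\<in>A. dist x a < e"
  using assms by (auto simp: infdist_notempty cINF_less_iff)




lemma sub_minus:
  assumes "closed_subspaceF X" "f \<in> X" "g \<in> X"
  shows "f - g \<in> X"
proof -
  have "f - g = f + scaleF (-1) g" by (rule bcontfun_eqI) simp
  with assms show ?thesis unfolding closed_subspaceF_def by metis
qed

lemma dual_phi0:
  assumes "closed_subspaceF X" "\<phi> \<in> dualF X"
  shows "\<phi> 0 = 0"
proof -
  have "0 \<in> X" using assms(1) by (simp add: closed_subspaceF_def)
  have H: "\<forall>x\<in>X. \<forall>y\<in>X. \<phi> (x + y) = \<phi> x + \<phi> y" using assms(2) by (simp add: dualF_def)
  have "\<phi> (0 + 0) = \<phi> 0 + \<phi> 0" using H \<open>0 \<in> X\<close> by blast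
  then show ?thesis by simp
qed

lemma dual_bdd:
  assumes "\<phi> \<in> dualF X"
  shows "bdd_above {norm (\<phi> x) | x. x \<in> X \<and> norm x \<le> 1}"
proof -
  obtain C where C: "\<forall>x\<in>X. norm (\<phi> x) \<le> C * norm x" using assms by (auto simp: dualF_def)
  have "norm (\<phi> x) \<le> \<bar>C\<bar>" if "x \<in> X" "norm x \<le> 1" for x
  proof -
    have "norm (\<phi> x) \<le> C * norm x" using C that by auto
    also have "\<dots> \<le> \<bar>C\<bar> * norm x" by (simp add: mult_right_mono)
    also have "\<dots> \<le> \<bar>C\<bar>" using that by (simp add: mult_left_le)
    finally show ?thesis .
  qed
  then show ?thesis by (auto intro!: bdd_aboveI[where M="\<bar>C\<bar>"])
qed

lemma dual_bound:
  fixes X :: "('a::topological_space \<Rightarrow>\<^sub>C 'f::real_normed_field) set"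
  assumes X: "closed_subspaceF X" and phi: "\<phi> \<in> dualF X" and f: "f \<in> X"
  shows "norm (\<phi> f) \<le> dual_norm X \<phi> * norm f"
proof (cases "f = 0")
  case True then show ?thesis using dual_phi0[OF X phi] by simp
next
  case False
  define f' where "f' = scaleF (of_real (1 / norm f)) f"
  have f'X: "f' \<in> X" using X f by (simp add: closed_subspaceF_def f'_def)
  have nf': "norm f' = 1" using False by (simp add: f'_def norm_scaleF norm_divide)
  have "\<phi> f' = of_real (1/norm f) * \<phi> f" using phi f by (simp add: dualF_def f'_def)
  then have "norm (\<phi> f') = norm (\<phi> f) / norm f" by (simp add: norm_mult norm_divide)
  moreover have "norm (\<phi> f') \<le> dual_norm X \<phi>"
    unfolding dual_norm_def using f'X nf' by (intro cSup_upper dual_bdd[OF phi]) auto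
  ultimately have "norm (\<phi> f) = norm f * norm (\<phi> f')" using False by (simp add: field_simps)
  also have "\<dots> \<le> norm f * dual_norm X \<phi>" by (rule mult_left_mono) (fact, simp)
  finally show ?thesis by (simp add: mult.commute)
qed

definition evalF :: "('a::topological_space \<Rightarrow>\<^sub>C 'f::real_normed_field) \<Rightarrow> 'a \<Rightarrow> (('a \<Rightarrow>\<^sub>C 'f) \<Rightarrow> 'f)" where
  "evalF e s = (\<lambda>f. (of_real ((norm e)\<^sup>2) / apply_bcontfun e s) * apply_bcontfun f s)"

lemma evalF_Dset:
  fixes X :: "('a::topological_space \<Rightarrow>\<^sub>C 'f::real_normed_field) set"
  assumes X: "closed_subspaceF X" and e: "e \<in> X" "e \<noteq> 0" and s: "norm (apply_bcontfun e s) = norm e"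
  shows "evalF e s \<in> Dset X e"
    and "\<And>f. norm (evalF e s f) = norm e * norm (apply_bcontfun f s)"
proof -
  have ne: "norm e > 0" using e by simp
  have es: "apply_bcontfun e s \<noteq> 0" using s ne by auto
  show nv: "norm (evalF e s f) = norm e * norm (apply_bcontfun f s)" for f
    using es ne by (simp add: evalF_def norm_mult norm_divide s power2_eq_square)
  have lin: "evalF e s \<in> dualF X"
    unfolding dualF_def
  proof (intro CollectI conjI ballI allI)
    show "evalF e s (x + y) = evalF e s x + evalF e s y" for x y
      by (simp add: evalF_def algebra_simps add_divide_distrib)
    show "evalF e s (scaleF c x) = c * evalF e s x" for c x
      by (simp add: evalF_def algebra_simps)
    show "\<exists>C. \<forall>x\<in>X. norm (evalF e s x) \<le> C * norm x"
      by (rule exI[of _ "norm e"]) (auto simp: nv intro!: mult_left_mono norm_bounded)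
  qed
  have dn: "dual_norm X (evalF e s) = norm e"
    unfolding dual_norm_def
  proof (rule cSup_eq_maximum)
    define e' where "e' = scaleF (of_real (1 / norm e)) e"
    have "e' \<in> X" using X e by (simp add: closed_subspaceF_def e'_def)
    moreover have "norm e' = 1" using ne by (simp add: e'_def norm_scaleF norm_divide)
    moreover have "norm (evalF e s e') = norm e"
      using ne by (simp add: nv e'_def norm_mult norm_divide s)
    ultimately show "norm e \<in> {norm (evalF e s x) |x. x \<in> X \<and> norm x \<le> 1}"
      by (metis (mono_tags, lifting) mem_Collect_eq order_refl)
  next
    fix y assume "y \<in> {norm (evalF e s x) |x. x \<in> X \<and> norm x \<le> 1}"
    then obtain x where "norm x \<le> 1" "y = norm (evalF e s x)" by auto
    moreover have "norm (apply_bcontfun x s) \<le> 1" using norm_bounded[of x s] \<open>norm x \<le> 1\<close> by simp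
    ultimately show "y \<le> norm e" using ne by (simp add: nv mult_left_le)
  qed
  have "evalF e s e = of_real ((norm e)\<^sup>2)" using es by (simp add: evalF_def)
  then show "evalF e s \<in> Dset X e"
    using lin dn by (simp add: Dset_def power2_eq_square)
qed




lemma tri3:
  fixes p q w :: "'f::real_normed_field"
  assumes "norm p = 1"
  shows "norm (of_real A * p + w + of_real B * p * q) \<le> \<bar>A\<bar> + norm w + \<bar>B\<bar> * norm q"
proof -
  have "norm (of_real A * p + w + of_real B * p * q) \<le> norm (of_real A * p) + norm w + norm (of_real B * p * q)"
    by (meson norm_triangle_ineq add_mono order_trans order_refl)
  also have "\<dots> = \<bar>A\<bar> + norm w + \<bar>B\<bar> * norm q" using assms by (simp add: norm_mult)
  finally show ?thesis .
qed

lemma tri_low: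
  fixes p q :: "'f::real_normed_field"
  assumes "norm p = 1"
  shows "norm (of_real A * p + of_real B * p * q) \<ge> \<bar>A\<bar> - \<bar>B\<bar> * norm q"
proof -
  have "norm (of_real A * p) \<le> norm (of_real A * p + of_real B * p * q) + norm (of_real B * p * q)"
    by (metis add_diff_cancel_right' norm_triangle_ineq4)
  then show ?thesis using assms by (simp add: norm_mult)
qed

lemma final_ineq:
  fixes \<eta> \<alpha> D :: real
  assumes "0 < \<eta>" "1/2 \<le> \<alpha>" "0 < D"
  shows "(1 - 40*\<eta>) * (\<alpha> * D * (1 + 10*\<eta>)) \<le> (1 - 2*\<eta>) * D - (1 - \<alpha>) * D * (1 + 10*\<eta>)"
proof -
  have "12 * \<eta> \<le> 40 * \<eta> * \<alpha> * (1 + 10*\<eta>)"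
  proof -
    have "12 * \<eta> \<le> 40 * \<eta> * \<alpha>" using assms by (simp add: mult_left_mono)
    also have "\<dots> \<le> 40 * \<eta> * \<alpha> * (1 + 10*\<eta>)" using assms by (simp add: mult_left_le)
    finally show ?thesis .
  qed
  then have "(1 - 40*\<eta>) * (\<alpha> * (1 + 10*\<eta>)) \<le> (1 - 2*\<eta>) - (1 - \<alpha>) * (1 + 10*\<eta>)"
    by (simp add: algebra_simps)
  from mult_right_mono[OF this, of D] assms show ?thesis by (simp add: algebra_simps)
qed




lemma core:
  fixes X :: "('k::t2_space \<Rightarrow>\<^sub>C 'f::real_normed_field) set"
  assumes K: "compact (UNIV::'k set)" and CR: "C_rich X"
    and TX: "\<forall>x\<in>X. T x \<in> X"
    and Tb: "\<forall>x\<in>X. \<forall>y\<in>X. norm (T x - T y) \<le> norm (x - y)"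
    and uX: "u \<in> X" and vX: "v \<in> X" and uv: "u \<noteq> v"
    and eta: "0 < \<eta>" "\<eta> \<le> 1/40"
    and good: "norm (T u - T v) > (1 - \<eta>) * norm (u - v)"
  shows "\<exists>x y \<phi>. x \<in> X \<and> y \<in> X \<and> x \<noteq> y \<and> \<phi> \<in> Dset X (x - y) \<and>
            norm (\<phi> (T x - T y)) / (norm (x - y))\<^sup>2 \<ge> 1 - 40*\<eta>"
proof -
  have SX: "closed_subspaceF X" using CR by (simp add: C_rich_def)
  have addX: "f + g \<in> X" if "f \<in> X" "g \<in> X" for f g using SX that by (simp add: closed_subspaceF_def)
  have scX: "scaleF c f \<in> X" if "f \<in> X" for c f using SX that by (simp add: closed_subspaceF_def)
  have subX: "f - g \<in> X" if "f \<in> X" "g \<in> X" for f g using sub_minus[OF SX that] .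
  define d where "d = u - v"
  define D where "D = norm d"
  have Dpos: "D > 0" using uv by (simp add: D_def d_def)
  have dX: "d \<in> X" using uX vX subX by (simp add: d_def)
  define z where "z = T u - T v"
  have zD: "norm z > (1 - \<eta>) * D" using good by (simp add: z_def D_def d_def)
  obtain t0 where t0: "norm (apply_bcontfun z t0) = norm z" using attains_norm[OF K] by blast
  define U where "U = {t. norm (apply_bcontfun z t - apply_bcontfun z t0) < \<eta>*D \<and>
                          norm (apply_bcontfun d t - apply_bcontfun d t0) < \<eta>*D}"
  have "open {t. norm (apply_bcontfun z t - apply_bcontfun z t0) < \<eta>*D}"
    by (rule open_Collect_less) (auto intro!: continuous_intros)
  moreover have "open {t. norm (apply_bcontfun d t - apply_bcontfun d t0) < \<eta>*D}"
    by (rule open_Collect_less) (auto intro!: continuous_intros)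
  ultimately have oU: "open U" unfolding U_def by (simp add: Collect_conj_eq open_Int)
  have t0U: "t0 \<in> U" using eta Dpos by (simp add: U_def)
  obtain h where hnn: "\<forall>t. \<exists>r\<ge>0. apply_bcontfun h t = of_real r" and hn: "norm h = 1"
    and hsupp: "closure {t. apply_bcontfun h t \<noteq> 0} \<subseteq> U" and hinf: "infdist h X < \<eta>"
  proof -
    have "\<forall>U. open U \<and> U \<noteq> {} \<longrightarrow> (\<forall>\<epsilon>>0. \<exists>h.
        (\<forall>t. \<exists>r\<ge>0. apply_bcontfun h t = of_real r) \<and> norm h = 1 \<and>
        closure {t. apply_bcontfun h t \<noteq> 0} \<subseteq> U \<and> infdist h X < \<epsilon>)"
      using CR by (simp add: C_rich_def)
    then have "\<exists>h. (\<forall>t. \<exists>r\<ge>0. apply_bcontfun h t = of_real r) \<and> norm h = 1 \<and>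
        closure {t. apply_bcontfun h t \<noteq> 0} \<subseteq> U \<and> infdist h X < \<eta>"
      using oU t0U eta by blast
    then show ?thesis using that by blast
  qed
  have "X \<noteq> {}" using SX by (auto simp: closed_subspaceF_def)
  then obtain g where gX: "g \<in> X" and hg0: "dist h g < \<eta>" using infdist_lt_ex[OF hinf] by blast
  have hg: "norm (apply_bcontfun g t - apply_bcontfun h t) < \<eta>" for t
    using dist_fun_lt_imp_dist_val_lt[OF hg0, of t] by (simp add: dist_norm norm_minus_commute)
  have hval: "\<exists>r. 0 \<le> r \<and> r \<le> 1 \<and> apply_bcontfun h t = of_real r \<and> (t \<notin> U \<longrightarrow> r = 0)" for t
  proof -
    from hnn obtain r where r: "r \<ge> 0" "apply_bcontfun h t = of_real r" by blast
    have "norm (apply_bcontfun h t) \<le> 1" using norm_bounded[of h t] hn by simp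
    then have "r \<le> 1" using r by simp
    moreover have "t \<notin> U \<longrightarrow> r = 0"
    proof
      assume "t \<notin> U"
      then have "apply_bcontfun h t = 0" using hsupp closure_subset[of "{t. apply_bcontfun h t \<noteq> 0}"] by auto
      then show "r = 0" using r by simp
    qed
    ultimately show ?thesis using r by blast
  qed
  obtain t1 where t1n: "norm (apply_bcontfun h t1) = 1" using attains_norm[OF K, of h] hn by auto
  have ht1: "apply_bcontfun h t1 = 1"
  proof -
    obtain r where "0 \<le> r" "apply_bcontfun h t1 = of_real r" using hval by blast
    with t1n show ?thesis by simp
  qed
  have t1U: "t1 \<in> U"
  proof -
    have "t1 \<in> {t. apply_bcontfun h t \<noteq> 0}" using ht1 by simp
    then show ?thesis using hsupp closure_subset[of "{t. apply_bcontfun h t \<noteq> 0}"] by blast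
  qed
  define a where "a = apply_bcontfun d t1"
  define m where "m = norm a"
  have m0: "0 \<le> m" and mD: "m \<le> D" using norm_bounded[of d t1] by (auto simp: m_def a_def D_def)
  have dU: "norm (apply_bcontfun d t - a) < 2*\<eta>*D" if "t \<in> U" for t
  proof -
    have "norm (apply_bcontfun d t - a) \<le> norm (apply_bcontfun d t - apply_bcontfun d t0) + norm (apply_bcontfun d t1 - apply_bcontfun d t0)"
    proof -
      have "apply_bcontfun d t - a = (apply_bcontfun d t - apply_bcontfun d t0) - (apply_bcontfun d t1 - apply_bcontfun d t0)"
        by (simp add: a_def)
      then show ?thesis by (metis norm_triangle_ineq4)
    qed
    then show ?thesis using that t1U by (simp add: U_def)
  qed
  obtain p :: 'f where pn: "norm p = 1" and ap: "a = of_real m * p"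
  proof (cases "a = 0")
    case True then show ?thesis using that[of 1] by (simp add: m_def)
  next
    case False then show ?thesis using that[of "a / of_real m"] by (simp add: m_def norm_divide)
  qed
  define \<kappa> where "\<kappa> = (1 + 5*\<eta>) * D"
  have eD: "0 < \<eta> * D" "\<eta> * D \<le> D / 40" using eta Dpos by (auto simp: mult_right_mono[of \<eta> "1/40" D, simplified])
  have k_eq: "\<kappa> = D + 5 * (\<eta> * D)" by (simp add: \<kappa>_def algebra_simps)
  have kD: "D \<le> \<kappa>" "\<kappa> \<le> 2*D" "\<kappa> > 0" using eD Dpos k_eq by auto
  define \<alpha> where "\<alpha> = (\<kappa> + m) / (2*\<kappa>)"
  have al: "1/2 \<le> \<alpha>" "\<alpha> \<le> 1" "0 < \<alpha>" using kD m0 mD by (auto simp: \<alpha>_def field_simps)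
  have alk: "\<alpha> * (\<kappa> - m) = (1 - \<alpha>) * (\<kappa> + m)" using kD by (simp add: \<alpha>_def field_simps)
  define e1 where "e1 = d + scaleF (of_real (\<kappa> - m) * p) g"
  have e1X: "e1 \<in> X" using dX gX addX scX by (simp add: e1_def)
  have decomp: "\<exists>r q w. 0 \<le> r \<and> r \<le> 1 \<and> norm q < \<eta> \<and>
      apply_bcontfun g t = of_real r + q \<and> apply_bcontfun d t = a + w \<and>
      (t \<in> U \<longrightarrow> norm w < 2*\<eta>*D) \<and> (t \<notin> U \<longrightarrow> r = 0)" for t
  proof -
    obtain r where r: "0 \<le> r" "r \<le> 1" "apply_bcontfun h t = of_real r" "t \<notin> U \<longrightarrow> r = 0" using hval by blast
    show ?thesis
      apply (rule exI[of _ r], rule exI[of _ "apply_bcontfun g t - apply_bcontfun h t"],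
             rule exI[of _ "apply_bcontfun d t - a"])
      using r hg[of t] dU[of t] by auto
  qed
  define e1 where "e1 = d + scaleF (of_real (\<kappa> - m) * p) g"
  have e1X: "e1 \<in> X" using dX gX addX scX by (simp add: e1_def)
  have decomp: "\<exists>r q w. 0 \<le> r \<and> r \<le> 1 \<and> norm q < \<eta> \<and>
      apply_bcontfun g t = of_real r + q \<and> apply_bcontfun d t = a + w \<and>
      (t \<in> U \<longrightarrow> norm w < 2*\<eta>*D) \<and> (t \<notin> U \<longrightarrow> r = 0)" for t
  proof -
    obtain r where r: "0 \<le> r" "r \<le> 1" "apply_bcontfun h t = of_real r" "t \<notin> U \<longrightarrow> r = 0" using hval by blast
    show ?thesis
      apply (rule exI[of _ r], rule exI[of _ "apply_bcontfun g t - apply_bcontfun h t"],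
             rule exI[of _ "apply_bcontfun d t - a"])
      using r hg[of t] dU[of t] by auto
  qed
  have keta: "\<kappa> * \<eta> \<le> 2 * D * \<eta>" using kD eta by (intro mult_right_mono) auto
  have keta2: "\<kappa> * \<eta> \<le> \<eta> * D + (1/8) * (\<eta> * D)"
  proof -
    have "\<eta> * (\<eta> * D) \<le> (1/40) * (\<eta> * D)" using eta eD by (intro mult_right_mono) auto
    then show ?thesis by (simp add: \<kappa>_def algebra_simps)
  qed
  have B1: "norm (apply_bcontfun e1 t) \<le> D * (1 + 10*\<eta>)" and B2: "t \<notin> U \<Longrightarrow> norm (apply_bcontfun e1 t) \<le> D * (1 + 2*\<eta>)" for t
  proof -
    obtain r q w where rqw: "0 \<le> r" "r \<le> 1" "norm q < \<eta>" "apply_bcontfun g t = of_real r + q"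
      "apply_bcontfun d t = a + w" "t \<in> U \<longrightarrow> norm w < 2*\<eta>*D" "t \<notin> U \<longrightarrow> r = 0"
      using decomp[of t] by blast
    have qb1: "\<bar>\<kappa> - m\<bar> * norm q \<le> \<kappa> * \<eta>" using kD mD m0 rqw(3)
      by (intro mult_mono) auto
    have nU: "norm (apply_bcontfun e1 t) \<le> D * (1 + 2*\<eta>)" if "t \<notin> U"
    proof -
      have "apply_bcontfun e1 t = apply_bcontfun d t + of_real (\<kappa> - m) * p * q"
        unfolding e1_def using rqw(4,7) that by (simp add: algebra_simps)
      also have "norm \<dots> \<le> norm (apply_bcontfun d t) + \<bar>\<kappa> - m\<bar> * norm q"
      proof -
        have "norm (of_real (\<kappa> - m) * p * q) = \<bar>\<kappa> - m\<bar> * norm q" using pn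
          by (simp only: norm_mult norm_of_real mult_1_right)
        then show ?thesis using norm_triangle_ineq[of "apply_bcontfun d t" "of_real (\<kappa> - m) * p * q"] by linarith
      qed
      finally show ?thesis using qb1 keta norm_bounded[of d t] by (simp add: D_def algebra_simps)
    qed
    then show "t \<notin> U \<Longrightarrow> norm (apply_bcontfun e1 t) \<le> D * (1 + 2*\<eta>)" .
    show "norm (apply_bcontfun e1 t) \<le> D * (1 + 10*\<eta>)"
    proof (cases "t \<in> U")
      case True
      have eq: "apply_bcontfun e1 t = of_real (m + (\<kappa> - m) * r) * p + w + of_real (\<kappa> - m) * p * q"
        unfolding e1_def using rqw(4,5) ap by (simp add: algebra_simps)
      have T: "norm (apply_bcontfun e1 t) \<le> \<bar>m + (\<kappa> - m) * r\<bar> + norm w + \<bar>\<kappa> - m\<bar> * norm q"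
        unfolding eq by (rule tri3[OF pn])
      have mr: "\<bar>m + (\<kappa> - m) * r\<bar> \<le> \<kappa>"
      proof -
        have "(\<kappa> - m) * r \<le> \<kappa> - m" using rqw(2) kD mD by (simp add: mult_left_le)
        moreover have "0 \<le> (\<kappa> - m) * r" using rqw(1) kD mD by simp
        ultimately show ?thesis using m0 by simp
      qed
      have "norm w < 2*\<eta>*D" using True rqw(6) by simp
      then have "norm (apply_bcontfun e1 t) \<le> \<kappa> + 2*(\<eta>*D) + \<kappa> * \<eta>"
        using T mr qb1 by simp
      also have "\<dots> \<le> D * (1 + 10*\<eta>)"
      proof -
        have "D * (1 + 10*\<eta>) = D + 10*(\<eta>*D)" by (simp add: algebra_simps)
        then show ?thesis using keta2 k_eq eD by linarith
      qed
      finally show ?thesis .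
    next
      case False
      then show ?thesis using nU eD by (simp add: algebra_simps)
    qed
  qed
  have B4: "norm (apply_bcontfun d t - of_real (\<kappa> + m) * p * apply_bcontfun g t) \<le> D * (1 + 10*\<eta>)" for t
  proof -
    obtain r q w where rqw: "0 \<le> r" "r \<le> 1" "norm q < \<eta>" "apply_bcontfun g t = of_real r + q"
      "apply_bcontfun d t = a + w" "t \<in> U \<longrightarrow> norm w < 2*\<eta>*D" "t \<notin> U \<longrightarrow> r = 0"
      using decomp[of t] by blast
    have qb1: "\<bar>-(\<kappa> + m)\<bar> * norm q \<le> \<eta> * D + (9/8) * (\<eta> * D)"
    proof -
      have "\<bar>-(\<kappa> + m)\<bar> * norm q \<le> (\<kappa> + D) * \<eta>" using kD mD m0 rqw(3)
        by (intro mult_mono) auto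
      then show ?thesis using keta2 by (simp add: algebra_simps)
    qed
    show ?thesis
    proof (cases "t \<in> U")
      case True
      have eq: "apply_bcontfun d t - of_real (\<kappa> + m) * p * apply_bcontfun g t
          = of_real (m - (\<kappa> + m) * r) * p + w + of_real (-(\<kappa> + m)) * p * q"
        using rqw(4,5) ap by (simp add: algebra_simps)
      have T: "norm (apply_bcontfun d t - of_real (\<kappa> + m) * p * apply_bcontfun g t) \<le> \<bar>m - (\<kappa> + m) * r\<bar> + norm w + \<bar>-(\<kappa> + m)\<bar> * norm q"
        unfolding eq by (rule tri3[OF pn])
      have mr: "\<bar>m - (\<kappa> + m) * r\<bar> \<le> \<kappa>"
      proof -
        have A: "(\<kappa> + m) * r \<le> \<kappa> + m" using rqw(2) kD m0 by (simp add: mult_left_le)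
        have B: "0 \<le> (\<kappa> + m) * r" using rqw(1) kD m0 by simp
        show ?thesis unfolding abs_le_iff using A B m0 mD kD by linarith
      qed
      have "norm w < 2*(\<eta>*D)" using True rqw(6) by (simp add: mult.assoc)
      then have "norm (apply_bcontfun d t - of_real (\<kappa> + m) * p * apply_bcontfun g t) \<le> \<kappa> + 2*(\<eta>*D) + (\<eta> * D + (9/8) * (\<eta> * D))"
        using T mr qb1 by linarith
      also have "\<dots> \<le> D * (1 + 10*\<eta>)"
      proof -
        have "D * (1 + 10*\<eta>) = D + 10*(\<eta>*D)" by (simp add: algebra_simps)
        then show ?thesis using k_eq eD by linarith
      qed
      finally show ?thesis .
    next
      case False
      have "apply_bcontfun d t - of_real (\<kappa> + m) * p * apply_bcontfun g t = apply_bcontfun d t + of_real (-(\<kappa> + m)) * p * q"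
        using rqw(4,7) False by (simp add: algebra_simps)
      also have "norm \<dots> \<le> norm (apply_bcontfun d t) + \<bar>-(\<kappa> + m)\<bar> * norm q"
      proof -
        have "norm (of_real (-(\<kappa> + m)) * p * q) = \<bar>-(\<kappa> + m)\<bar> * norm q" using pn
          by (simp only: norm_mult norm_of_real mult_1_right)
        then show ?thesis using norm_triangle_ineq[of "apply_bcontfun d t" "of_real (-(\<kappa> + m)) * p * q"] by linarith
      qed
      finally show ?thesis
      proof -
        assume H: "norm (apply_bcontfun d t - of_real (\<kappa> + m) * p * apply_bcontfun g t)
            \<le> norm (apply_bcontfun d t) + \<bar>- (\<kappa> + m)\<bar> * norm q"
        have "D * (1 + 10*\<eta>) = D + 10*(\<eta>*D)" by (simp add: algebra_simps)
        then show ?thesis using H qb1 eD norm_bounded[of d t] unfolding D_def by linarith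
      qed
    qed
  qed
  have B3: "norm (apply_bcontfun e1 t1) > D * (1 + 2*\<eta>)"
  proof -
    obtain q where q: "apply_bcontfun g t1 = 1 + q" "norm q < \<eta>"
      using hg[of t1] ht1 by (intro that[of "apply_bcontfun g t1 - 1"]) auto
    have eq: "apply_bcontfun e1 t1 = of_real \<kappa> * p + of_real (\<kappa> - m) * p * q"
      unfolding e1_def using q(1) ap by (simp add: a_def[symmetric] algebra_simps)
    have "norm (apply_bcontfun e1 t1) \<ge> \<bar>\<kappa>\<bar> - \<bar>\<kappa> - m\<bar> * norm q"
      unfolding eq by (rule tri_low[OF pn])
    moreover have "\<bar>\<kappa> - m\<bar> * norm q \<le> \<kappa> * \<eta>" using kD mD m0 q(2)
      by (intro mult_mono) auto
    moreover have "D * (1 + 2*\<eta>) = D + 2*(\<eta>*D)" by (simp add: algebra_simps)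
    ultimately show ?thesis using kD keta2 k_eq eD by linarith
  qed
  obtain s where s: "norm (apply_bcontfun e1 s) = norm e1" using attains_norm[OF K] by blast
  have sU: "s \<in> U"
  proof (rule ccontr)
    assume "s \<notin> U"
    then have "norm e1 \<le> D * (1 + 2*\<eta>)" using B1 B2[of s] s by simp
    then show False using B3 norm_bounded[of e1 t1] by linarith
  qed
  define x where "x = v + scaleF (of_real \<alpha>) e1"
  define e where "e = scaleF (of_real \<alpha>) e1"
  have xv: "x - v = e" by (simp add: x_def e_def)
  have xX: "x \<in> X" using vX e1X addX scX by (simp add: x_def)
  have eX: "e \<in> X" using e1X scX by (simp add: e_def)
  have ne1: "norm e1 > 0"
  proof -
    have "0 < D*(1+2*\<eta>)" using Dpos eta by simp
    then show ?thesis using B3 norm_bounded[of e1 t1] by linarith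
  qed
  have ne: "norm e = \<alpha> * norm e1" using al by (simp add: e_def norm_scaleF)
  have e0: "e \<noteq> 0" using ne ne1 al by auto
  have es: "norm (apply_bcontfun e s) = norm e" using ne s al by (simp add: e_def norm_mult)
  have xnv: "x \<noteq> v" using xv e0 by auto
  define \<phi> where "\<phi> = evalF e s"
  have phiD: "\<phi> \<in> Dset X (x - v)" unfolding \<phi>_def xv by (rule evalF_Dset(1)[OF SX eX e0 es])
  have phin: "norm (\<phi> (T x - T v)) = norm e * norm (apply_bcontfun (T x - T v) s)"
    unfolding \<phi>_def by (rule evalF_Dset(2)[OF SX eX e0 es])
  have ux: "apply_bcontfun (u - x) t = of_real (1 - \<alpha>) * (apply_bcontfun d t - of_real (\<kappa> + m) * p * apply_bcontfun g t)" for t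
  proof -
    have "apply_bcontfun (u - x) t = apply_bcontfun d t - of_real \<alpha> * apply_bcontfun d t - of_real (\<alpha> * (\<kappa> - m)) * p * apply_bcontfun g t"
      by (simp add: x_def e1_def d_def algebra_simps)
    also have "\<dots> = apply_bcontfun d t - of_real \<alpha> * apply_bcontfun d t - of_real ((1 - \<alpha>) * (\<kappa> + m)) * p * apply_bcontfun g t"
      by (simp only: alk)
    also have "\<dots> = of_real (1 - \<alpha>) * (apply_bcontfun d t - of_real (\<kappa> + m) * p * apply_bcontfun g t)"
      by (simp add: algebra_simps)
    finally show ?thesis .
  qed
  have nux: "norm (u - x) \<le> (1 - \<alpha>) * (D * (1 + 10*\<eta>))"
  proof (rule norm_bound)
    fix t show "norm (apply_bcontfun (u - x) t) \<le> (1 - \<alpha>) * (D * (1 + 10*\<eta>))"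
      unfolding ux norm_mult norm_of_real using al B4[of t] by (intro mult_mono) auto
  qed
  have nTux: "norm (apply_bcontfun (T u - T x) s) \<le> (1 - \<alpha>) * (D * (1 + 10*\<eta>))"
    using norm_bounded[of "T u - T x" s] Tb uX xX nux by fastforce
  have zs: "norm (apply_bcontfun z s) \<ge> norm z - \<eta> * D"
  proof -
    have "norm (apply_bcontfun z t0) \<le> norm (apply_bcontfun z s) + norm (apply_bcontfun z t0 - apply_bcontfun z s)"
      using norm_triangle_ineq[of "apply_bcontfun z s" "apply_bcontfun z t0 - apply_bcontfun z s"] by simp
    moreover have "norm (apply_bcontfun z t0 - apply_bcontfun z s) < \<eta> * D"
      using sU by (simp add: U_def norm_minus_commute)
    ultimately show ?thesis using t0 by linarith
  qed
  have zsplit: "apply_bcontfun z s = apply_bcontfun (T u - T x) s + apply_bcontfun (T x - T v) s"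
    by (simp add: z_def)
  have low: "norm (apply_bcontfun (T x - T v) s) \<ge> (1 - 2*\<eta>) * D - (1 - \<alpha>) * D * (1 + 10*\<eta>)"
  proof -
    have "norm (apply_bcontfun z s) \<le> norm (apply_bcontfun (T u - T x) s) + norm (apply_bcontfun (T x - T v) s)"
      unfolding zsplit by (rule norm_triangle_ineq)
    moreover have "(1 - 2*\<eta>) * D = (1 - \<eta>) * D - \<eta> * D" by (simp add: algebra_simps)
    moreover have "(1 - \<alpha>) * D * (1 + 10*\<eta>) = (1 - \<alpha>) * (D * (1 + 10*\<eta>))" by (simp add: mult.assoc)
    ultimately show ?thesis using zs zD nTux by linarith
  qed
  have neb: "norm e \<le> \<alpha> * (D * (1 + 10*\<eta>))"
    unfolding ne using al by (intro mult_left_mono norm_bound B1) auto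
  have fin: "(1 - 40*\<eta>) * norm e \<le> norm (apply_bcontfun (T x - T v) s)"
  proof -
    have "(1 - 40*\<eta>) * norm e \<le> (1 - 40*\<eta>) * (\<alpha> * (D * (1 + 10*\<eta>)))"
      using neb eta by (intro mult_left_mono) auto
    also have "\<dots> \<le> (1 - 2*\<eta>) * D - (1 - \<alpha>) * D * (1 + 10*\<eta>)"
      using final_ineq[OF eta(1) al(1) Dpos] by (simp add: mult.assoc)
    finally show ?thesis using low by linarith
  qed
  have "norm (\<phi> (T x - T v)) / (norm (x - v))\<^sup>2 = norm (apply_bcontfun (T x - T v) s) / norm e"
    using e0 by (simp add: phin xv power2_eq_square)
  also have "\<dots> \<ge> 1 - 40*\<eta>" using fin e0 by (simp add: field_simps)
  finally show ?thesis using xX vX xnv phiD by blast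
qed




lemma nL_one:
  fixes X :: "('k::t2_space \<Rightarrow>\<^sub>C 'f::real_normed_field) set"
  assumes K: "compact (UNIV::'k set)" and CR: "C_rich X"
  shows "nL X = 1"
proof -
  have SX: "closed_subspaceF X" using CR by (simp add: C_rich_def)
  have X0: "0 \<in> X" using SX by (simp add: closed_subspaceF_def)
  have subX: "f - g \<in> X" if "f \<in> X" "g \<in> X" for f g using sub_minus[OF SX that] .
  obtain g0 where g0X: "g0 \<in> X" and g0: "g0 \<noteq> 0"
  proof -
    have "\<forall>U. open U \<and> U \<noteq> {} \<longrightarrow> (\<forall>\<epsilon>>0. \<exists>h.
        (\<forall>t. \<exists>r\<ge>0. apply_bcontfun h t = of_real r) \<and> norm h = 1 \<and>
        closure {t. apply_bcontfun h t \<noteq> 0} \<subseteq> U \<and> infdist h X < \<epsilon>)"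
      using CR by (simp add: C_rich_def)
    then have "\<exists>h. norm h = 1 \<and> infdist h X < 1/2"
      by (metis UNIV_not_empty open_UNIV half_gt_zero_iff zero_less_one)
    then obtain h where h: "norm h = 1" "infdist h X < 1/2" by blast
    then obtain g where "g \<in> X" "dist h g < 1/2" using infdist_lt_ex[OF h(2)] X0 by blast
    moreover have "g \<noteq> 0" using calculation h(1) by (auto simp: dist_norm)
    ultimately show ?thesis using that by blast
  qed
  have omega1: "omega X T = 1" if TL: "T \<in> Lip0 X" and TN: "lip_norm X T = 1" for T
  proof -
    have TX: "\<forall>x\<in>X. T x \<in> X" using TL by (auto simp: Lip0_def)
    obtain C where C: "C-lipschitz_on X T" using TL by (auto simp: Lip0_def)
    define Q where "Q = {norm (T x - T y) / norm (x - y) | x y. x \<in> X \<and> y \<in> X \<and> x \<noteq> y}"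
    have Qne: "Q \<noteq> {}" unfolding Q_def using g0X X0 g0 by blast
    have Qbdd: "bdd_above Q"
    proof (rule bdd_aboveI)
      fix q assume "q \<in> Q"
      then obtain x y where xy: "x \<in> X" "y \<in> X" "x \<noteq> y" "q = norm (T x - T y) / norm (x - y)"
        unfolding Q_def by blast
      have "norm (T x - T y) \<le> C * norm (x - y)"
        using C xy by (simp add: lipschitz_on_def dist_norm)
      then show "q \<le> C" using xy by (simp add: divide_le_eq)
    qed
    have QS: "Sup Q = 1" using TN by (simp add: lip_norm_def Q_def)
    have Tb: "\<forall>x\<in>X. \<forall>y\<in>X. norm (T x - T y) \<le> norm (x - y)"
    proof (intro ballI)
      fix x y assume xy: "x \<in> X" "y \<in> X"
      show "norm (T x - T y) \<le> norm (x - y)"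
      proof (cases "x = y")
        case False
        have "norm (T x - T y) / norm (x - y) \<in> Q" unfolding Q_def using xy False by blast
        then have "norm (T x - T y) / norm (x - y) \<le> 1" using cSup_upper[OF _ Qbdd] QS by metis
        then show ?thesis using False by (simp add: divide_le_eq)
      qed simp
    qed
    define W where "W = {norm (\<phi> (T x - T y)) / (norm (x - y))\<^sup>2 | x y \<phi>.
                     x \<in> X \<and> y \<in> X \<and> x \<noteq> y \<and> \<phi> \<in> Dset X (x - y)}"
    have Wle: "w \<le> 1" if "w \<in> W" for w
    proof -
      obtain x y \<phi> where xy: "x \<in> X" "y \<in> X" "x \<noteq> y" "\<phi> \<in> Dset X (x - y)"
        and w: "w = norm (\<phi> (T x - T y)) / (norm (x - y))\<^sup>2"
        using \<open>w \<in> W\<close> unfolding W_def by blast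
      have np: "norm (x - y) > 0" using xy by simp
      have phi: "\<phi> \<in> dualF X" and dn0: "dual_norm X \<phi> * norm (x - y) = (norm (x - y))\<^sup>2"
        using xy(4) by (auto simp: Dset_def)
      have dn: "dual_norm X \<phi> = norm (x - y)" using dn0 np by (simp add: power2_eq_square)
      have "norm (\<phi> (T x - T y)) \<le> dual_norm X \<phi> * norm (T x - T y)"
        by (rule dual_bound[OF SX phi subX]) (use TX xy in auto)
      also have "\<dots> \<le> norm (x - y) * norm (x - y)" unfolding dn
        using Tb xy by (intro mult_left_mono) auto
      finally show ?thesis using np by (simp add: w power2_eq_square divide_le_eq)
    qed
    have Wapprox: "\<exists>w\<in>W. w \<ge> 1 - \<epsilon>" if eps: "0 < \<epsilon>" "\<epsilon> \<le> 1" for \<epsilon>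
    proof -
      have "1 - \<epsilon>/40 < Sup Q" using QS eps by simp
      then obtain q where "q \<in> Q" "1 - \<epsilon>/40 < q" using less_cSup_iff[OF Qne Qbdd] by blast
      then obtain u v where uv: "u \<in> X" "v \<in> X" "u \<noteq> v" "1 - \<epsilon>/40 < norm (T u - T v) / norm (u - v)"
        unfolding Q_def by blast
      have good: "norm (T u - T v) > (1 - \<epsilon>/40) * norm (u - v)"
        using uv by (simp add: less_divide_eq)
      have "\<exists>x y \<phi>. x \<in> X \<and> y \<in> X \<and> x \<noteq> y \<and> \<phi> \<in> Dset X (x - y) \<and>
            norm (\<phi> (T x - T y)) / (norm (x - y))\<^sup>2 \<ge> 1 - 40*(\<epsilon>/40)"
        by (rule core[OF K CR TX Tb uv(1,2,3) _ _ good]) (use eps in auto)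
      then show ?thesis unfolding W_def by auto
    qed
    have Wne: "W \<noteq> {}" using Wapprox[of 1] by auto
    have Wbdd: "bdd_above W" using Wle by (auto intro!: bdd_aboveI)
    have "Sup W \<le> 1" using Wle Wne by (intro cSup_least) auto
    moreover have "Sup W \<ge> 1"
    proof (rule ccontr)
      assume "\<not> Sup W \<ge> 1"
      then have lt: "Sup W < 1" by simp
      define \<epsilon> where "\<epsilon> = (1 - Sup W) / 2"
      have "0 < \<epsilon>" "\<epsilon> \<le> 1" using lt \<open>Sup W \<le> 1\<close> Wne Wle cSup_upper[OF _ Wbdd]
        apply (simp_all add: \<epsilon>_def)
        using Wapprox[of 1] cSup_upper[OF _ Wbdd] by fastforce
      then obtain w where "w \<in> W" "w \<ge> 1 - \<epsilon>" using Wapprox by blast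
      moreover have "w \<le> Sup W" using cSup_upper[OF \<open>w \<in> W\<close> Wbdd] .
      ultimately have "1 - (1 - Sup W) / 2 \<le> Sup W" unfolding \<epsilon>_def by linarith
      then show False using lt by (simp add: field_simps)
    qed
    ultimately show ?thesis by (simp add: omega_def W_def[symmetric])
  qed
  have idL: "id \<in> Lip0 X" unfolding Lip0_def
    by (auto intro!: exI[of _ 1] simp: lipschitz_on_def)
  have idN: "lip_norm X id = 1"
  proof -
    have "{norm (id x - id y) / norm (x - y) | x y. x \<in> X \<and> y \<in> X \<and> x \<noteq> y} = {1}"
      using g0X X0 g0 by auto
    then show ?thesis by (simp add: lip_norm_def)
  qed
  have "{omega X T | T. T \<in> Lip0 X \<and> lip_norm X T = 1} = {1}"
    using omega1 idL idN by (auto intro!: exI[of _ id])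
  then show ?thesis by (simp add: nL_def)
qed


theorem corollary2p13:
  fixes XR :: "('k::t2_space \<Rightarrow>\<^sub>C real) set"
    and XC :: "('k \<Rightarrow>\<^sub>C complex) set"
  assumes "compact (UNIV :: 'k set)"
  shows "(C_rich XR \<longrightarrow> nL XR = 1) \<and> (C_rich XC \<longrightarrow> nL XC = 1)"
  using nL_one[OF assms, where ?'f=real] nL_one[OF assms, where ?'f=complex] by blast

end
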